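(* Let $p$ be an odd prime and $n$ a positive integer with $p^n>3$, let $d=\frac{p^n-3}{2}$ and $F(x)=x^d$ on $\mathrm{GF}(p^n)$. For $c=-1$, ${}_c\Delta_F\le4$.
   Context: For a function $F:\mathrm{GF}(p^n)\to\mathrm{GF}(p^n)$ and $a,b,c\in\mathrm{GF}(p^n)$, let ${}_c\Delta_F(a,b)=\#\{x\in\mathrm{GF}(p^n): F(x+a)-cF(x)=b\}$. The $c$-differential uniformity of $F$ is ${}_c\Delta_F=\max\{{}_c\Delta_F(a,b): a,b\in\mathrm{GF}(p^n),\ \text{and } a\neq 0 \text{ if } c=1\}$. *)

theory Defs
  imports Main "HOL-Computational_Algebra.Primes"
begin

definition c_delta :: "('a::{field,finite} \<Rightarrow> 'a) \<Rightarrow> 'a \<Rightarrow> 'a \<Rightarrow> 'a \<Rightarrow> nat" where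
  "c_delta F c a b = card {x. F (x + a) - c * F x = b}"

definition c_diff_uniformity :: "('a::{field,finite} \<Rightarrow> 'a) \<Rightarrow> 'a \<Rightarrow> nat" where
  "c_diff_uniformity F c = Max {c_delta F c a b | a b. c = 1 \<longrightarrow> a \<noteq> 0}"

end

theory Submission
  imports Defs
begin

lemma card_pair_le:
  fixes X :: "'a::ab_group_add set"
  assumes "finite X" and "\<And>x y. x \<in> X \<Longrightarrow> y \<in> X \<Longrightarrow> y = x \<or> y = k - x"
  shows "card X \<le> 2"
proof (cases "X = {}")
  case True thus ?thesis by simp
next
  case False
  then obtain x where x: "x \<in> X" by blast
  have "X \<subseteq> {x, k - x}" using assms(2)[OF x] by blast
  hence "card X \<le> card {x, k-x}" by (simp add: card_mono)
  also have "\<dots> \<le> 2" by (cases "x = k - x") auto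
  finally show ?thesis .
qed

lemma card_one_le:
  assumes "finite X" and "\<And>x y. x \<in> X \<Longrightarrow> y \<in> X \<Longrightarrow> y = x"
  shows "card X \<le> 1"
  using assms card_le_Suc0_iff_eq by (metis One_nat_def)

lemma sum0: "z + w = 0 \<Longrightarrow> z = -(w::'a::ab_group_add)"
  by (metis minus_unique minus_minus)

lemma prod_helper:
  fixes b x y c :: "'a::comm_ring_1"
  assumes "b*x*y = c" shows "c*b = x*y*(b*b)"
proof -
  have "x*y*(b*b) = (b*x*y)*b" by (simp add: ac_simps)
  thus ?thesis using assms by simp
qed

lemma fermat_field:
  fixes x :: "'a::{field,finite}"
  assumes x0: "x \<noteq> 0"
  shows "x ^ (card (UNIV::'a set) - 1) = 1"
proof -
  let ?U = "UNIV - {0::'a}"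
  have bij: "bij_betw (\<lambda>y. x*y) ?U ?U"
    by (rule bij_betw_byWitness[where f'="\<lambda>y. y/x"]) (auto simp: x0)
  have "(\<Prod>y\<in>?U. x*y) = (\<Prod>y\<in>?U. y)"
    using prod.reindex_bij_betw[OF bij, where g="\<lambda>y. y"] by simp
  moreover have "(\<Prod>y\<in>?U. x*y) = x ^ card ?U * (\<Prod>y\<in>?U. y)"
    by (simp add: prod.distrib)
  moreover have "card ?U = card (UNIV::'a set) - 1" by (simp add: card_Diff_singleton)
  moreover have "(\<Prod>y\<in>?U. y) \<noteq> 0" by simp
  ultimately show ?thesis by (metis mult_cancel_right2)
qed

lemma of_nat_card_zero:
  "of_nat (card (UNIV::'a::{field,finite} set)) = (0::'a)"
proof -
  have bij: "bij_betw (\<lambda>y::'a. y + 1) UNIV UNIV"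
    by (rule bij_betw_byWitness[where f'="\<lambda>y. y - 1"]) auto
  have "(\<Sum>y\<in>UNIV. y + 1) = (\<Sum>y\<in>UNIV. (y::'a))"
    using sum.reindex_bij_betw[OF bij, where g="\<lambda>y. y"] by simp
  moreover have "(\<Sum>y\<in>UNIV. y + 1) = (\<Sum>y\<in>UNIV. (y::'a)) + of_nat (card (UNIV::'a set))"
    by (simp add: sum.distrib)
  ultimately show ?thesis by simp
qed

context
  fixes m :: nat
  assumes m2: "m \<ge> 2"
    and two: "(2::'a::{field,finite}) \<noteq> 0"
    and ferm: "\<And>x::'a. x \<noteq> 0 \<Longrightarrow> x ^ (2*m) = 1"
begin

lemma one_ne: "(1::'a) \<noteq> -1"
proof
  assume "(1::'a) = -1"
  hence "(2::'a) = 0" by (metis add.right_inverse one_add_one)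
  thus False using two by simp
qed

lemma chi_sq: "(x::'a) \<noteq> 0 \<Longrightarrow> x^m * x^m = 1"
  using ferm by (metis mult_2 power_add)

lemma chi_pm: "(x::'a) \<noteq> 0 \<Longrightarrow> x^m = 1 \<or> x^m = -1"
proof -
  assume x: "x \<noteq> 0"
  have "(x^m - 1)*(x^m+1) = x^m*x^m - 1" by (simp add: algebra_simps)
  hence "(x^m - 1)*(x^m+1) = 0" using chi_sq[OF x] by simp
  thus ?thesis by (auto simp: eq_neg_iff_add_eq_0)
qed

lemma F_mul: "(x::'a)^(m-1) * x = x^m"
proof -
  have "m = Suc (m-1)" using m2 by simp
  thus ?thesis by (metis power_Suc2)
qed

lemma F0: "(0::'a)^(m-1) = 0" using m2 by simp

lemma cube:
  fixes a x :: 'a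
  assumes a: "a \<noteq> 0" and h: "x*(x+a) = -(a*a)"
  shows "x^m = a^m"
proof -
  have x0: "x \<noteq> 0" using h a by auto
  have "x^3 - a^3 = (x - a) * (x*(x+a) + a*a)" by algebra
  hence "x^3 = a^3" using h by simp
  moreover have "x^4 = x * x^3" by (simp add: eval_nat_numeral)
  ultimately have "x^4 = x * a^3" by simp
  hence "(x^4)^m = (x*a^3)^m" by simp
  moreover have "(x^4)^m = (x^m)^4" by (metis power_mult mult.commute)
  moreover have "(x^m)^4 = (x^m*x^m)*(x^m*x^m)" by (simp add: eval_nat_numeral)
  moreover have "(a^3)^m = (a^m)^3" by (metis power_mult mult.commute)
  moreover have "(a^m)^3 = a^m*(a^m*a^m)" by (simp add: eval_nat_numeral)
  moreover have "(x*a^3)^m = x^m * (a^3)^m" by (simp add: power_mult_distrib)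
  ultimately have "x^m * a^m = 1" using chi_sq[OF x0] chi_sq[OF a] by simp
  thus ?thesis using chi_pm[OF x0] chi_pm[OF a] one_ne by auto
qed

lemma key:
  fixes a b x :: 'a
  assumes "x \<noteq> 0" "x + a \<noteq> 0" and eq: "(x+a)^(m-1) + x^(m-1) = b"
  shows "(x+a)^m * x + x^m * (x+a) = b*x*(x+a)"
proof -
  have "b*x*(x+a) = ((x+a)^(m-1) + x^(m-1))*x*(x+a)" using eq by simp
  also have "\<dots> = ((x+a)^(m-1)*(x+a))*x + (x^(m-1)*x)*(x+a)" by (simp add: algebra_simps)
  finally have "b*x*(x+a) = (x+a)^m * x + x^m*(x+a)" by (simp only: F_mul)
  thus ?thesis by simp
qed

lemma F0': "(0::'a)^(m - Suc 0) = 0" using F0 by simp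

lemma F_nz: "(x::'a) \<noteq> 0 \<Longrightarrow> x^(m-1) \<noteq> 0"
  by simp

lemma count_a0:
  fixes b :: 'a
  shows "card {x. (x+0)^(m-1) + x^(m-1) = b} \<le> 2"
proof (rule card_pair_le[where k=0])
  show "finite {x. (x+0)^(m-1) + x^(m-1) = b}" by simp
next
  fix x y assume x: "x \<in> {x. (x+0)^(m-1) + x^(m-1) = b}" and y: "y \<in> {x. (x+0)^(m-1) + x^(m-1) = b}"
  have "x^(m-1) + x^(m-1) = y^(m-1) + y^(m-1)" using x y by simp
  hence "2 * x^(m-1) = 2 * y^(m-1)" by (simp only: mult_2)
  hence eq: "x^(m-1) = y^(m-1)" using two by simp
  show "y = x \<or> y = 0 - x"
  proof (cases "x = 0 \<or> y = 0")
    case True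
    thus ?thesis using eq F0 F_nz by (metis diff_self)
  next
    case False
    hence x0: "x \<noteq> 0" and y0: "y \<noteq> 0" by auto
    have "x^m * y = (x^(m-1)*x)*y" by (simp only: F_mul)
    also have "\<dots> = (y^(m-1)*x)*y" by (simp only: eq)
    also have "\<dots> = (y^(m-1)*y)*x" by (simp only: ac_simps)
    also have "\<dots> = y^m * x" by (simp only: F_mul)
    finally have e: "x^m * y = y^m * x" .
    consider "x^m = 1" "y^m = 1" | "x^m = -1" "y^m = -1"
      | "x^m = -1" "y^m = 1" | "x^m = 1" "y^m = -1"
      using chi_pm[OF x0] chi_pm[OF y0] by blast
    thus ?thesis
    proof cases
      case 1 thus ?thesis using e by simp
    next
      case 2 thus ?thesis using e by simp
    next
      case 3
      hence "-y = x" using e by simp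
      thus ?thesis by (metis diff_0 minus_minus)
    next
      case 4
      hence "y = -x" using e by simp
      thus ?thesis by simp
    qed
  qed
qed

lemma count_b0:
  fixes a :: 'a
  assumes a: "a \<noteq> 0"
  shows "card {x. (x+a)^(m-1) + x^(m-1) = 0} \<le> 1"
proof (rule card_one_le)
  show "finite {x. (x+a)^(m-1) + x^(m-1) = 0}" by simp
next
  have P: "2*x + a = 0" if x: "x \<in> {x. (x+a)^(m-1) + x^(m-1) = 0}" for x
  proof -
    have x0: "x \<noteq> 0"
    proof
      assume x0: "x = 0"
      have "(0+a)^(m-1) + 0^(m-1) = 0" using x x0 by simp
      hence "a^(m-1) = 0" by (simp only: F0 add_0 add_0_right)
      thus False using F_nz[OF a] by simp
    qed
    have xa: "x + a \<noteq> 0"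
    proof
      assume "x + a = 0"
      hence xa: "x = -a" by (rule sum0)
      have "(-a+a)^(m-1) + (-a)^(m-1) = 0" using x xa by simp
      hence "(-a)^(m-1) = 0" by (simp only: F0 add_0 add.left_inverse)
      thus False using F_nz[of "-a"] a by simp
    qed
    have k: "(x+a)^m * x + x^m * (x+a) = 0" using key[OF x0 xa] x by auto
    consider "x^m = 1" "(x+a)^m = 1" | "x^m = -1" "(x+a)^m = -1"
      | "x^m = -1" "(x+a)^m = 1" | "x^m = 1" "(x+a)^m = -1"
      using chi_pm[OF x0] chi_pm[OF xa] by blast
    thus ?thesis
    proof cases
      case 1 thus ?thesis using k by (simp add: algebra_simps mult_2)
    next
      case 2
      show ?thesis using k[unfolded 2] by algebra
    next
      case 3 thus ?thesis using k a by (simp add: algebra_simps mult_2)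
    next
      case 4 thus ?thesis using k a by (simp add: algebra_simps mult_2)
    qed
  qed
  fix x y assume x: "x \<in> {x. (x+a)^(m-1) + x^(m-1) = 0}" and y: "y \<in> {x. (x+a)^(m-1) + x^(m-1) = 0}"
  have "2*x = 2*y" using P[OF x] P[OF y] by (metis add_right_cancel)
  thus "y = x" using two by simp
qed

lemma pow_neg: "(-(z::'a))^m = (-1)^m * z^m"
  by (fact power_minus)

lemma pow4: assumes "(u::'a) = v*w*(c*c)" shows "u^m = v^m*w^m*(c^m*c^m)"
  using assms by (simp only: power_mult_distrib)

lemma count_main:
  fixes a b :: 'a
  assumes a: "a \<noteq> 0" and b: "b \<noteq> 0"
  shows "card {x. (x+a)^(m-1) + x^(m-1) = b} \<le> 4"
proof -
  define S where "S = {x. (x+a)^(m-1) + x^(m-1) = b}"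
  define e where "e = (-1::'a)^m"
  define Sp where "Sp = S \<inter> {0, -a}"
  define A where "A = {x. x \<noteq> 0 \<and> x+a \<noteq> 0 \<and> x^m = 1 \<and> (x+a)^m = 1 \<and> b*x*(x+a) = 2*x+a}"
  define B where "B = {x. x \<noteq> 0 \<and> x+a \<noteq> 0 \<and> x^m = -1 \<and> (x+a)^m = -1 \<and> b*x*(x+a) = -(2*x+a)}"
  define C where "C = {x. x \<noteq> 0 \<and> x+a \<noteq> 0 \<and> x^m = -1 \<and> (x+a)^m = 1 \<and> b*x*(x+a) = -a}"
  define D where "D = {x. x \<noteq> 0 \<and> x+a \<noteq> 0 \<and> x^m = 1 \<and> (x+a)^m = -1 \<and> b*x*(x+a) = a}"
  have sub: "S \<subseteq> Sp \<union> (A \<union> B) \<union> C \<union> D"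
  proof
    fix x assume xS: "x \<in> S"
    show "x \<in> Sp \<union> (A \<union> B) \<union> C \<union> D"
    proof (cases "x = 0 \<or> x + a = 0")
      case True
      then have "x \<in> {0, -a}" using sum0[of x a] by auto
      thus ?thesis using xS Sp_def by auto
    next
      case False
      hence x0: "x \<noteq> 0" and xa: "x + a \<noteq> 0" by auto
      have k: "(x+a)^m * x + x^m*(x+a) = b*x*(x+a)" using key[OF x0 xa] xS S_def by auto
      consider "x^m = 1" "(x+a)^m = 1" | "x^m = -1" "(x+a)^m = -1"
        | "x^m = -1" "(x+a)^m = 1" | "x^m = 1" "(x+a)^m = -1"
        using chi_pm[OF x0] chi_pm[OF xa] by blast
      thus ?thesis
      proof cases
        case 1
        have "b*x*(x+a) = 2*x+a" using k[unfolded 1] by algebra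
        thus ?thesis using 1 x0 xa A_def by auto
      next
        case 2
        have "b*x*(x+a) = -(2*x+a)" using k[unfolded 2] by algebra
        thus ?thesis using 2 x0 xa B_def by auto
      next
        case 3
        have "b*x*(x+a) = -a" using k[unfolded 3] by algebra
        thus ?thesis using 3 x0 xa C_def by auto
      next
        case 4
        have "b*x*(x+a) = a" using k[unfolded 4] by algebra
        thus ?thesis using 4 x0 xa D_def by auto
      qed
    qed
  qed
  have "card S \<le> card (Sp \<union> (A \<union> B) \<union> C \<union> D)" by (rule card_mono) (simp_all add: sub)
  also have "\<dots> \<le> card Sp + card (A \<union> B) + card C + card D"
  proof -
    have "card (Sp \<union> (A \<union> B) \<union> C \<union> D) \<le> card (Sp \<union> (A \<union> B) \<union> C) + card D" by (rule card_Un_le)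
    moreover have "card (Sp \<union> (A \<union> B) \<union> C) \<le> card (Sp \<union> (A \<union> B)) + card C" by (rule card_Un_le)
    moreover have "card (Sp \<union> (A \<union> B)) \<le> card Sp + card (A \<union> B)" by (rule card_Un_le)
    ultimately show ?thesis by linarith
  qed
  finally have main: "card S \<le> card Sp + card (A \<union> B) + card C + card D" .
  have bb: "b^m * b^m = 1" using chi_sq[OF b] .
  have epm: "e = 1 \<or> e = -1" unfolding e_def by (rule chi_pm) simp
  have nab: "(-a*b)^m = e * (a*b)^m" unfolding e_def using pow_neg[of "a*b"] by simp
  have fA2: "(-a*b)^m = 1 \<and> (a*b)^m = 1" if x: "x \<in> A" and y: "y \<in> A" and ne: "x \<noteq> y" for x y
  proof -
    have ex: "b*x*(x+a) = 2*x+a" and ey: "b*y*(y+a) = 2*y+a" using x y A_def by auto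
    have "(x-y)*(b*x*y+a) = y*(b*x*(x+a) - (2*x+a)) - x*(b*y*(y+a) - (2*y+a))" by algebra
    hence "(x-y)*(b*x*y+a) = 0" using ex ey by simp
    hence "b*x*y + a = 0" using ne by simp
    hence p1: "b*x*y = -a" by (rule sum0)
    have "(x-y)*(b*(x+a)*(y+a) - a) = (y+a)*(b*x*(x+a) - (2*x+a)) - (x+a)*(b*y*(y+a) - (2*y+a))" by algebra
    hence "(x-y)*(b*(x+a)*(y+a) - a) = 0" using ex ey by simp
    hence p2: "b*(x+a)*(y+a) = a" using ne by simp
    have "-a*b = (x*y)*(b*b)" using prod_helper[OF p1] .
    hence "(-a*b)^m = x^m*y^m*(b^m*b^m)" by (rule pow4)
    also have "x^m*y^m*(b^m*b^m) = 1" using x y A_def bb by simp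
    finally have c1: "(-a*b)^m = 1" .
    have "a*b = ((x+a)*(y+a))*(b*b)" using prod_helper[OF p2] .
    hence "(a*b)^m = (x+a)^m*(y+a)^m*(b^m*b^m)" by (rule pow4)
    also have "(x+a)^m*(y+a)^m*(b^m*b^m) = 1" using x y A_def bb by simp
    finally have "(a*b)^m = 1" .
    thus ?thesis using c1 by simp
  qed
  have fB2: "(-a*b)^m = 1 \<and> (a*b)^m = 1" if x: "x \<in> B" and y: "y \<in> B" and ne: "x \<noteq> y" for x y
  proof -
    have ex: "b*x*(x+a) = -(2*x+a)" and ey: "b*y*(y+a) = -(2*y+a)" using x y B_def by auto
    have "(x-y)*(b*x*y-a) = y*(b*x*(x+a) + (2*x+a)) - x*(b*y*(y+a) + (2*y+a))" by algebra
    hence "(x-y)*(b*x*y-a) = 0" using ex ey by simp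
    hence p1: "b*x*y = a" using ne by simp
    have "(x-y)*(b*(x+a)*(y+a) + a) = (y+a)*(b*x*(x+a) + (2*x+a)) - (x+a)*(b*y*(y+a) + (2*y+a))" by algebra
    hence "(x-y)*(b*(x+a)*(y+a) + a) = 0" using ex ey by simp
    hence "b*(x+a)*(y+a) + a = 0" using ne by simp
    hence p2: "b*(x+a)*(y+a) = -a" by (rule sum0)
    have "a*b = (x*y)*(b*b)" using prod_helper[OF p1] .
    hence "(a*b)^m = x^m*y^m*(b^m*b^m)" by (rule pow4)
    also have "x^m*y^m*(b^m*b^m) = 1" using x y B_def bb by simp
    finally have c1: "(a*b)^m = 1" .
    have "-a*b = ((x+a)*(y+a))*(b*b)" using prod_helper[OF p2] .
    hence "(-a*b)^m = (x+a)^m*(y+a)^m*(b^m*b^m)" by (rule pow4)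
    also have "(x+a)^m*(y+a)^m*(b^m*b^m) = 1" using x y B_def bb by simp
    finally have "(-a*b)^m = 1" .
    thus ?thesis using c1 by simp
  qed
  have fC: "(-a*b)^m = -1" if x: "x \<in> C" for x
  proof -
    have h: "b*x*(x+a) = -a" using x C_def by simp
    have "-a*b = (x*(x+a))*(b*b)" using prod_helper[OF h] .
    hence "(-a*b)^m = x^m*(x+a)^m*(b^m*b^m)" by (rule pow4)
    also have "x^m*(x+a)^m*(b^m*b^m) = -1" using x C_def bb by simp
    finally show ?thesis .
  qed
  have fD: "(a*b)^m = -1" if x: "x \<in> D" for x
  proof -
    have h: "b*x*(x+a) = a" using x D_def by simp
    have "a*b = (x*(x+a))*(b*b)" using prod_helper[OF h] .
    hence "(a*b)^m = x^m*(x+a)^m*(b^m*b^m)" by (rule pow4)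
    also have "x^m*(x+a)^m*(b^m*b^m) = -1" using x D_def bb by simp
    finally show ?thesis .
  qed
  have Cpair: "y = x \<or> y = -a - x" if x: "x \<in> C" and y: "y \<in> C" for x y
  proof -
    have "(x-y)*(x+y+a)*b = b*x*(x+a) - b*y*(y+a)" by algebra
    hence "(x-y)*(x+y+a)*b = 0" using x y C_def by simp
    hence "x - y = 0 \<or> x+y+a = 0" using b by simp
    moreover have "x+y+a = 0 \<Longrightarrow> y = -a - x" by algebra
    ultimately show ?thesis by auto
  qed
  have Dpair: "y = x \<or> y = -a - x" if x: "x \<in> D" and y: "y \<in> D" for x y
  proof -
    have "(x-y)*(x+y+a)*b = b*x*(x+a) - b*y*(y+a)" by algebra
    hence "(x-y)*(x+y+a)*b = 0" using x y D_def by simp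
    hence "x - y = 0 \<or> x+y+a = 0" using b by simp
    moreover have "x+y+a = 0 \<Longrightarrow> y = -a - x" by algebra
    ultimately show ?thesis by auto
  qed
  have C2: "card C \<le> 2" by (rule card_pair_le[where k="-a"]) (simp_all add: Cpair)
  have D2: "card D \<le> 2" by (rule card_pair_le[where k="-a"]) (simp_all add: Dpair)
  have am: "a^m = 1 \<or> a^m = -1" using chi_pm[OF a] .
  have sp0: "a*b = a^m" if h: "0 \<in> S"
  proof -
    have "(0+a)^(m-1) + 0^(m-1) = b" using h S_def by simp
    hence "a^(m-1) = b" by (simp only: F0 add_0 add_0_right)
    thus ?thesis by (metis F_mul mult.commute)
  qed
  have spa: "-(a*b) = e*a^m" if h: "-a \<in> S"
  proof -
    have "(-a+a)^(m-1) + (-a)^(m-1) = b" using h S_def by simp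
    hence "(-a)^(m-1) = b" by (simp only: F0 add_0 add.left_inverse)
    hence "(-a)*b = (-a)^m" by (metis F_mul mult.commute)
    thus ?thesis using pow_neg[of a] unfolding e_def by simp
  qed
  have AB2: "card (A \<union> B) \<le> 2"
  proof (cases "e = 1")
    case True
    define R where "R = {r. b*r*(r+a) = 2*r+a}"
    have R2: "card R \<le> 2"
    proof (rule card_pair_le[where k="(2 - a*b)/b"])
      show "finite R" by simp
    next
      fix x y assume x: "x \<in> R" and y: "y \<in> R"
      have "(x-y)*(b*(x+y) + a*b - 2) = (b*x*(x+a) - (2*x+a)) - (b*y*(y+a) - (2*y+a))" by algebra
      hence "(x-y)*(b*(x+y) + a*b - 2) = 0" using x y R_def by simp
      hence "x = y \<or> b*(x+y) + a*b - 2 = 0" by simp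
      moreover have "y = (2 - a*b)/b - x" if h: "b*(x+y) + a*b - 2 = 0"
      proof -
        have "b*y = 2 - a*b - b*x" using h by algebra
        thus ?thesis using b by (simp add: field_simps)
      qed
      ultimately show "y = x \<or> y = (2 - a*b)/b - x" by auto
    qed
    define \<phi> where "\<phi> = (\<lambda>x::'a. if x^m = 1 then x else -a-x)"
    have inj: "inj_on \<phi> (A \<union> B)"
    proof (rule inj_onI)
      fix x y assume x: "x \<in> A \<union> B" and y: "y \<in> A \<union> B" and eq: "\<phi> x = \<phi> y"
      have cross: False if u: "u \<in> A" and v: "v \<in> B" and uv: "u = -a-v" for u v
      proof -
        have "u = -(v+a)" using uv by simp
        hence "u^m = e*(v+a)^m" unfolding e_def using pow_neg[of "v+a"] by simp
        thus False using u v A_def B_def True one_ne by auto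
      qed
      show "x = y"
      proof (cases "x \<in> A")
        case xA: True
        show ?thesis
        proof (cases "y \<in> A")
          case True thus ?thesis using xA eq \<phi>_def A_def by auto
        next
          case False
          hence yB: "y \<in> B" using y by auto
          have "x = -a-y" using eq xA yB \<phi>_def A_def B_def one_ne by auto
          thus ?thesis using cross[OF xA yB] by simp
        qed
      next
        case False
        hence xB: "x \<in> B" using x by auto
        show ?thesis
        proof (cases "y \<in> A")
          case yA: True
          have "y = -a-x" using eq yA xB \<phi>_def A_def B_def one_ne by auto
          thus ?thesis using cross[OF yA xB] by simp
        next
          case False
          hence yB: "y \<in> B" using y by auto
          show ?thesis using eq xB yB \<phi>_def B_def one_ne by (auto split: if_splits)
        qed
      qed
    qed
    have img: "\<phi> ` (A \<union> B) \<subseteq> R"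
    proof
      fix z assume "z \<in> \<phi> ` (A \<union> B)"
      then obtain x where x: "x \<in> A \<union> B" and z: "z = \<phi> x" by blast
      show "z \<in> R"
      proof (cases "x \<in> A")
        case True thus ?thesis using z \<phi>_def A_def R_def by auto
      next
        case False
        hence xB: "x \<in> B" using x by auto
        hence zx: "z = -a-x" using z \<phi>_def B_def one_ne by auto
        have ex: "b*x*(x+a) = -(2*x+a)" using xB B_def by auto
        have "b*(-a-x)*(-a-x+a) - (2*(-a-x)+a) = b*x*(x+a) + (2*x+a)" by algebra
        hence "b*(-a-x)*(-a-x+a) = 2*(-a-x)+a" using ex by simp
        thus ?thesis using zx R_def by simp
      qed
    qed
    have "card (A \<union> B) \<le> card R" by (rule card_inj_on_le[OF inj img]) simp
    thus ?thesis using R2 by simp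
  next
    case False
    hence em: "e = -1" using epm by simp
    have A1: "card A \<le> 1"
    proof (rule card_one_le)
      show "finite A" by simp
    next
      fix x y assume "x \<in> A" "y \<in> A"
      show "y = x"
      proof (rule ccontr)
        assume "y \<noteq> x"
        hence "(-a*b)^m = 1 \<and> (a*b)^m = 1" using fA2 \<open>x \<in> A\<close> \<open>y \<in> A\<close> by metis
        thus False using nab em one_ne by auto
      qed
    qed
    have B1: "card B \<le> 1"
    proof (rule card_one_le)
      show "finite B" by simp
    next
      fix x y assume "x \<in> B" "y \<in> B"
      show "y = x"
      proof (rule ccontr)
        assume "y \<noteq> x"
        hence "(-a*b)^m = 1 \<and> (a*b)^m = 1" using fB2 \<open>x \<in> B\<close> \<open>y \<in> B\<close> by metis
        thus False using nab em one_ne by auto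
      qed
    qed
    have "card (A \<union> B) \<le> card A + card B" by (rule card_Un_le)
    thus ?thesis using A1 B1 by simp
  qed
  show ?thesis
  proof (cases "e = 1")
    case e1: True
    have Sp1: "card Sp \<le> 1"
    proof (rule card_one_le)
      show "finite Sp" by simp
    next
      fix x y assume x: "x \<in> Sp" and y: "y \<in> Sp"
      show "y = x"
      proof (rule ccontr)
        assume ne: "y \<noteq> x"
        have "0 \<in> S \<and> -a \<in> S" using x y ne Sp_def by auto
        hence "a*b = a^m" "-(a*b) = a^m" using sp0 spa e1 by auto
        hence "a^m = -(a^m)" by simp
        thus False using am one_ne by (metis minus_minus)
      qed
    qed
    have C1: "card C \<le> 1"
    proof (rule card_one_le)
      show "finite C" by simp
    next
      fix x y assume x: "x \<in> C" and y: "y \<in> C"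
      show "y = x"
      proof (rule ccontr)
        assume ne: "y \<noteq> x"
        hence "y = -(x+a)" using Cpair[OF x y] by (simp add: algebra_simps)
        hence "y^m = e*(x+a)^m" unfolding e_def using pow_neg[of "x+a"] by simp
        thus False using x y C_def e1 one_ne by auto
      qed
    qed
    have D1: "card D \<le> 1"
    proof (rule card_one_le)
      show "finite D" by simp
    next
      fix x y assume x: "x \<in> D" and y: "y \<in> D"
      show "y = x"
      proof (rule ccontr)
        assume ne: "y \<noteq> x"
        hence "y = -(x+a)" using Dpair[OF x y] by (simp add: algebra_simps)
        hence "y^m = e*(x+a)^m" unfolding e_def using pow_neg[of "x+a"] by simp
        thus False using x y D_def e1 one_ne by auto
      qed
    qed
    show ?thesis
    proof (cases "Sp = {}")
      case True
      thus ?thesis using main AB2 C1 D1 S_def by simp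
    next
      case False
      then obtain z where "z \<in> Sp" by blast
      hence "0 \<in> S \<or> -a \<in> S" using Sp_def by auto
      moreover have "a*b = -(a^m)" if "-a \<in> S"
      proof -
        have "-(a*b) = a^m" using spa[OF that] e1 by simp
        thus ?thesis by (metis minus_minus)
      qed
      ultimately have "a*b = a^m \<or> a*b = -(a^m)" using sp0 by auto
      hence "a*b = 1 \<or> a*b = -1" using am by (metis minus_minus)
      hence ab1: "(a*b)^m = 1" by (elim disjE) (simp_all add: e1[unfolded e_def])
      hence ab2: "(-a*b)^m = 1" using nab e1 by simp
      have "C = {}" using fC ab2 one_ne by force
      moreover have "D = {}" using fD ab1 one_ne by force
      ultimately show ?thesis using main AB2 Sp1 S_def by simp
    qed
  next
    case False
    hence em: "e = -1" using epm by simp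
    show ?thesis
    proof (cases "Sp = {}")
      case True
      have "C = {} \<or> D = {}"
      proof (rule ccontr)
        assume "\<not> (C = {} \<or> D = {})"
        then obtain x y where "x \<in> C" "y \<in> D" by blast
        hence "(-a*b)^m = -1" "(a*b)^m = -1" using fC fD by auto
        thus False using nab em one_ne by simp
      qed
      thus ?thesis using main AB2 C2 D2 True S_def by auto
    next
      case False
      then obtain z where "z \<in> Sp" by blast
      hence "0 \<in> S \<or> -a \<in> S" using Sp_def by auto
      moreover have "a*b = a^m" if "-a \<in> S"
      proof -
        have "-(a*b) = -(a^m)" using spa[OF that] em by simp
        thus ?thesis by (metis minus_minus)
      qed
      ultimately have abm: "a*b = a^m" using sp0 by auto
      have mulh: "a*b*(x*(x+a)) = a*(b*x*(x+a))" for x by (simp add: ac_simps)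
      have "C = {}"
      proof (rule ccontr)
        assume "C \<noteq> {}"
        then obtain x where x: "x \<in> C" by blast
        have h: "b*x*(x+a) = -a" using x C_def by simp
        show False
        proof (cases "a^m = 1")
          case True
          have "x*(x+a) = -(a*a)" using mulh[of x] h abm True by simp
          hence "x^m = a^m" using cube[OF a] by simp
          thus False using x C_def True one_ne by auto
        next
          case False
          hence "a*b = -1" using am abm by simp
          hence "(-a*b)^m = 1" by simp
          thus False using fC[OF x] one_ne by simp
        qed
      qed
      moreover have "D = {}"
      proof (rule ccontr)
        assume "D \<noteq> {}"
        then obtain x where x: "x \<in> D" by blast
        have h: "b*x*(x+a) = a" using x D_def by simp
        show False
        proof (cases "a^m = 1")
          case True
          hence "(a*b)^m = 1" using abm by simp
          thus False using fD[OF x] one_ne by simp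
        next
          case False
          hence am1: "a^m = -1" using am by simp
          have "-(x*(x+a)) = a*a" using mulh[of x] h abm am1 by simp
          hence "x*(x+a) = -(a*a)" by (simp add: minus_equation_iff)
          hence "x^m = a^m" using cube[OF a] by simp
          thus False using x D_def am1 one_ne by auto
        qed
      qed
      moreover have "card Sp \<le> 2"
      proof -
        have "card Sp \<le> card {0, -a}" by (rule card_mono) (auto simp: Sp_def)
        also have "\<dots> \<le> 2" by (cases "(0::'a) = -a") auto
        finally show ?thesis .
      qed
      ultimately show ?thesis using main AB2 S_def by simp
    qed
  qed
qed

end


lemma count_all:
  fixes m :: nat
  assumes m2: "m \<ge> 2" and two: "(2::'a::{field,finite}) \<noteq> 0"
    and ferm: "\<And>x::'a. x \<noteq> 0 \<Longrightarrow> x ^ (2*m) = 1"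
  shows "card {x::'a. (x+a)^(m-1) + x^(m-1) = b} \<le> 4"
proof -
  consider "a = 0" | "a \<noteq> 0" "b = 0" | "a \<noteq> 0" "b \<noteq> 0" by blast
  thus ?thesis
  proof cases
    case 1 thus ?thesis using count_a0[OF m2 two ferm, of b] by simp
  next
    case 2 thus ?thesis using count_b0[OF m2 two ferm, of a] by simp
  next
    case 3 thus ?thesis using count_main[OF m2 two ferm, of a b] by simp
  qed
qed

theorem theorem8:
  fixes p n :: nat and F :: "'a::{field,finite} \<Rightarrow> 'a"
  assumes "prime p" and "odd p" and "n > 0"
    and "card (UNIV :: 'a set) = p ^ n"
    and "p ^ n > 3"
    and "F = (\<lambda>x. x ^ ((p ^ n - 3) div 2))"
  shows "c_diff_uniformity F (-1) \<le> 4"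
proof -
  define q where "q = p ^ n"
  have oq: "odd q" using assms(2) q_def by simp
  have q3: "q > 3" using assms(5) q_def by simp
  define m where "m = (q - 1) div 2"
  have qm: "q = 2*m + 1" using oq m_def by (auto elim!: oddE)
  have m2: "m \<ge> 2"
  proof (rule ccontr)
    assume "\<not> m \<ge> 2"
    hence "m \<le> 1" by simp
    thus False using qm q3 by simp
  qed
  have dm: "(p ^ n - 3) div 2 = m - 1" using qm q_def by simp
  have two: "(2::'a) \<noteq> 0"
  proof
    assume h: "(2::'a) = 0"
    have "(of_nat q :: 'a) = 0" using of_nat_card_zero assms(4) q_def by metis
    also have "(of_nat q :: 'a) = 2 * of_nat m + 1" using qm by simp
    finally show False using h by simp
  qed
  have ferm: "x ^ (2*m) = 1" if "x \<noteq> 0" for x :: 'a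
  proof -
    have "card (UNIV::'a set) - 1 = 2*m" using assms(4) q_def qm by simp
    thus ?thesis using fermat_field[OF that] by simp
  qed
  let ?M = "{c_delta F (-1) a b | a b. (-1::'a) = 1 \<longrightarrow> a \<noteq> 0}"
  have fin: "finite ?M"
  proof (rule finite_subset)
    show "?M \<subseteq> (\<lambda>(a,b). c_delta F (-1) a b) ` UNIV" by auto
  qed simp
  have ne: "c_delta F (-1) 1 0 \<in> ?M" by auto
  have le: "k \<le> 4" if "k \<in> ?M" for k
  proof -
    obtain a b where k: "k = c_delta F (-1) a b" using \<open>k \<in> ?M\<close> by blast
    have "k = card {x::'a. (x+a)^(m-1) + x^(m-1) = b}"
      unfolding k c_delta_def assms(6) dm by simp
    thus ?thesis using count_all[OF m2 two ferm] by simp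
  qed
  show ?thesis unfolding c_diff_uniformity_def
    using fin ne le by (subst Max_le_iff) auto
qed

end
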